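(* Let $\Omega=\{P_1,\dots,P_n\}\subseteq\mathbb{F}[x;\sigma,\delta]$ be a set of $n$ distinct skew polynomials of degree at least $1$ with $I(\Omega)\ne\{0\}$, and let $N=\deg(F_\Omega)$. For $F\in\mathbb{F}[x;\sigma,\delta]$ and a non-zero $P$, let $F(P)$ denote the remainder of the right Euclidean division of $F$ by $P$ (so $\deg F(P)<\deg P$), viewed as an element of the left module $\mathbb{F}[x;\sigma,\delta]/(P)$, where $(P)$ is the left ideal generated by $P$. The following are equivalent: (1) $\Omega$ is P-independent; (2) the left $\mathbb{F}$-linear map $\phi:\mathbb{F}[x;\sigma,\delta]_N\to\prod_{i=1}^n\mathbb{F}[x;\sigma,\delta]/(P_i)$, $\phi(F)=(F(P_i))_{i=1}^n$, is an isomorphism of left vector spaces, where $\mathbb{F}[x;\sigma,\delta]_N=\{F:\deg F<N\}$; (3) the left $\mathbb{F}$-linear map $\psi:\mathbb{F}[x;\sigma,\delta]\to\prod_{i=1}^n\mathbb{F}[x;\sigma,\delta]/(P_i)$, $\psi(F)=(F(P_i))_{i=1}^n$, is surjective.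
   Context: Let $\mathbb{F}$ be a division ring, $\sigma$ a ring endomorphism of $\mathbb{F}$ and $\delta$ a $\sigma$-derivation. $\mathbb{F}[x;\sigma,\delta]$ is the skew polynomial ring (left $\mathbb{F}$-vector space with basis $\{x^i\}$, $xa=\sigma(a)x+\delta(a)$), a domain with additive degree and right Euclidean division. For a set $\Omega$ of skew polynomials, $I(\Omega)$ is the left ideal of all $F$ right-divisible by every element of $\Omega$, and $F_\Omega$ is its monic generator of minimal degree (or $0$ if $I(\Omega)=\{0\}$). $\Omega$ is P-independent if it is finite, $I(\Omega)\ne\{0\}$ and $\deg F_\Omega=\sum_{P\in\Omega}\deg P$. *)

theory Defs
  imports "HOL-Computational_Algebra.Polynomial" "HOL-Library.FuncSet"
begin

text \<open>Skew polynomials F[x;sigma,delta] over a division ring are represented by their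
  left coefficient vectors (the type 'a poly, F = sum of (coeff F i) x^i, coefficients on the left);
  addition and left scalar multiplication (lsmult) are the usual ones, and the skew product is
  defined below from the rule x a = sigma(a) x + delta(a).\<close>

definition ring_endo :: "('a::division_ring \<Rightarrow> 'a) \<Rightarrow> bool" where
  "ring_endo \<sigma> \<longleftrightarrow> (\<forall>a b. \<sigma> (a + b) = \<sigma> a + \<sigma> b) \<and> (\<forall>a b. \<sigma> (a * b) = \<sigma> a * \<sigma> b) \<and> \<sigma> 1 = 1"

definition sigma_derivation :: "('a::division_ring \<Rightarrow> 'a) \<Rightarrow> ('a \<Rightarrow> 'a) \<Rightarrow> bool" where
  "sigma_derivation \<sigma> \<delta> \<longleftrightarrow> (\<forall>a b. \<delta> (a + b) = \<delta> a + \<delta> b) \<and>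
     (\<forall>a b. \<delta> (a * b) = \<sigma> a * \<delta> b + \<delta> a * b)"

definition lsmult :: "'a::division_ring \<Rightarrow> 'a poly \<Rightarrow> 'a poly" where
  "lsmult a p = map_poly (\<lambda>c. a * c) p"

text \<open>xpow_mul sigma delta i b is the skew polynomial x^i b.\<close>
fun xpow_mul :: "('a::division_ring \<Rightarrow> 'a) \<Rightarrow> ('a \<Rightarrow> 'a) \<Rightarrow> nat \<Rightarrow> 'a \<Rightarrow> 'a poly" where
  "xpow_mul \<sigma> \<delta> 0 b = [:b:]"
| "xpow_mul \<sigma> \<delta> (Suc i) b =
     pCons 0 (map_poly \<sigma> (xpow_mul \<sigma> \<delta> i b)) + map_poly \<delta> (xpow_mul \<sigma> \<delta> i b)"

text \<open>Right multiplication by x^j.\<close>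
definition xshift :: "nat \<Rightarrow> 'a::zero poly \<Rightarrow> 'a poly" where
  "xshift j p = ((pCons 0) ^^ j) p"

definition skew_mult :: "('a::division_ring \<Rightarrow> 'a) \<Rightarrow> ('a \<Rightarrow> 'a) \<Rightarrow> 'a poly \<Rightarrow> 'a poly \<Rightarrow> 'a poly" where
  "skew_mult \<sigma> \<delta> F G =
     (\<Sum>i\<le>degree F. \<Sum>j\<le>degree G. lsmult (coeff F i) (xshift j (xpow_mul \<sigma> \<delta> i (coeff G j))))"

definition skew_I :: "('a::division_ring \<Rightarrow> 'a) \<Rightarrow> ('a \<Rightarrow> 'a) \<Rightarrow> 'a poly set \<Rightarrow> 'a poly set" where
  "skew_I \<sigma> \<delta> \<Omega> = {F. \<forall>P\<in>\<Omega>. \<exists>Q. F = skew_mult \<sigma> \<delta> Q P}"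

definition skew_F :: "('a::division_ring \<Rightarrow> 'a) \<Rightarrow> ('a \<Rightarrow> 'a) \<Rightarrow> 'a poly set \<Rightarrow> 'a poly" where
  "skew_F \<sigma> \<delta> \<Omega> = (if skew_I \<sigma> \<delta> \<Omega> = {0} then 0 else
     (THE F. F \<in> skew_I \<sigma> \<delta> \<Omega> \<and> F \<noteq> 0 \<and> lead_coeff F = 1 \<and>
        (\<forall>G\<in>skew_I \<sigma> \<delta> \<Omega>. G \<noteq> 0 \<longrightarrow> degree F \<le> degree G)))"

definition P_independent :: "('a::division_ring \<Rightarrow> 'a) \<Rightarrow> ('a \<Rightarrow> 'a) \<Rightarrow> 'a poly set \<Rightarrow> bool" where
  "P_independent \<sigma> \<delta> \<Omega> \<longleftrightarrow> finite \<Omega> \<and> skew_I \<sigma> \<delta> \<Omega> \<noteq> {0} \<and>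
     degree (skew_F \<sigma> \<delta> \<Omega>) = (\<Sum>P\<in>\<Omega>. degree P)"

definition deg_less :: "nat \<Rightarrow> 'a::zero poly set" where
  "deg_less N = {F. F = 0 \<or> degree F < N}"

text \<open>F(P): remainder of the right Euclidean division of F by P.
  The quotient module F[x;sigma,delta]/(P) is represented by the set of
  remainders deg_less (degree P) (canonical representatives).\<close>
definition skew_rem :: "('a::division_ring \<Rightarrow> 'a) \<Rightarrow> ('a \<Rightarrow> 'a) \<Rightarrow> 'a poly \<Rightarrow> 'a poly \<Rightarrow> 'a poly" where
  "skew_rem \<sigma> \<delta> F P = (THE R. R \<in> deg_less (degree P) \<and> (\<exists>Q. F = skew_mult \<sigma> \<delta> Q P + R))"

definition left_linear_on :: "'a::division_ring poly set \<Rightarrow> nat \<Rightarrow> ('a poly \<Rightarrow> nat \<Rightarrow> 'a poly) \<Rightarrow> bool" where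
  "left_linear_on V n f \<longleftrightarrow>
     (\<forall>F\<in>V. \<forall>G\<in>V. f (F + G) = (\<lambda>i\<in>{..<n}. f F i + f G i)) \<and>
     (\<forall>a. \<forall>F\<in>V. f (lsmult a F) = (\<lambda>i\<in>{..<n}. lsmult a (f F i)))"

end

theory Submission
  imports Defs
begin

definition Vs :: "'i set \<Rightarrow> ('i \<Rightarrow> 'a::zero) set" where
  "Vs I = {v. \<forall>x. x \<notin> I \<longrightarrow> v x = 0}"

definition llin :: "'i set \<Rightarrow> (('i \<Rightarrow> 'a::division_ring) \<Rightarrow> ('j \<Rightarrow> 'a)) \<Rightarrow> bool" where
  "llin I L \<longleftrightarrow> (\<forall>u\<in>Vs I. \<forall>v\<in>Vs I. L (\<lambda>x. u x + v x) = (\<lambda>y. L u y + L v y)) \<and>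
     (\<forall>a. \<forall>v\<in>Vs I. L (\<lambda>x. a * v x) = (\<lambda>y. a * L v y))"

definition evec :: "'i \<Rightarrow> 'i \<Rightarrow> 'a::{zero,one}" where
  "evec x = (\<lambda>z. if z = x then 1 else 0)"

lemma Vs_add: "(u::'i\<Rightarrow>'a::division_ring) \<in> Vs I \<Longrightarrow> v \<in> Vs I \<Longrightarrow> (\<lambda>x. u x + v x) \<in> Vs I"
  by (auto simp: Vs_def)
lemma Vs_scale: "v \<in> Vs I \<Longrightarrow> (\<lambda>x. (a::'a::division_ring) * v x) \<in> Vs I"
  by (auto simp: Vs_def)
lemma Vs_zero: "(\<lambda>_. 0) \<in> Vs I"
  by (auto simp: Vs_def)
lemma Vs_evec: "x \<in> I \<Longrightarrow> evec x \<in> Vs I"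
  by (auto simp: Vs_def evec_def)
lemma Vs_sum: "(\<And>k. k \<in> K \<Longrightarrow> (f k::'i\<Rightarrow>'a::division_ring) \<in> Vs I) \<Longrightarrow> (\<lambda>x. \<Sum>k\<in>K. f k x) \<in> Vs I"
  by (auto simp: Vs_def intro!: sum.neutral)

lemma llin_add: "llin I L \<Longrightarrow> u \<in> Vs I \<Longrightarrow> v \<in> Vs I \<Longrightarrow> L (\<lambda>x. u x + v x) = (\<lambda>y. L u y + L v y)"
  by (simp add: llin_def)
lemma llin_scale: "llin I L \<Longrightarrow> v \<in> Vs I \<Longrightarrow> L (\<lambda>x. a * v x) = (\<lambda>y. a * L v y)"
  by (simp add: llin_def)
lemma llin_zero: "llin I L \<Longrightarrow> L (\<lambda>_. 0) = (\<lambda>_. 0)"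
  using llin_scale[of I L "\<lambda>_. 0" 0] by (simp add: Vs_zero)

lemma llin_sum:
  assumes "llin I L" "finite K" "\<And>k. k \<in> K \<Longrightarrow> f k \<in> Vs I"
  shows "L (\<lambda>x. \<Sum>k\<in>K. f k x) = (\<lambda>y. \<Sum>k\<in>K. L (f k) y)"
  using assms(2,3)
proof (induction K rule: finite_induct)
  case empty then show ?case using llin_zero[OF assms(1)] by simp
next
  case (insert k K)
  have "L (\<lambda>x. \<Sum>k\<in>insert k K. f k x) = L (\<lambda>x. f k x + (\<Sum>k\<in>K. f k x))"
    using insert by simp
  also have "\<dots> = (\<lambda>y. L (f k) y + L (\<lambda>x. \<Sum>k\<in>K. f k x) y)"
    using llin_add[OF assms(1), of "f k" "\<lambda>x. \<Sum>k\<in>K. f k x"] insert Vs_sum[of K f I] by simp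
  finally show ?case using insert by simp
qed

lemma llin_diff:
  assumes "llin I L" "u \<in> Vs I" "v \<in> Vs I"
  shows "L (\<lambda>x. u x - v x) = (\<lambda>y. L u y - L v y)"
proof -
  have v': "(\<lambda>x. -1 * v x) \<in> Vs I" by (rule Vs_scale[OF assms(3)])
  have "L (\<lambda>x. u x - v x) = L (\<lambda>x. u x + (\<lambda>x. -1 * v x) x)" by simp
  also have "\<dots> = (\<lambda>y. L u y + L (\<lambda>x. -1 * v x) y)"
    by (rule llin_add[OF assms(1,2) v'])
  also have "\<dots> = (\<lambda>y. L u y + -1 * L v y)" using llin_scale[OF assms(1,3), of "-1"] by (simp only:)
  finally show ?thesis by simp
qed

lemma Vs_expand:
  assumes "finite I" "(v::'i\<Rightarrow>'a::division_ring) \<in> Vs I"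
  shows "v = (\<lambda>z. \<Sum>x\<in>I. v x * evec x z)"
proof
  fix z
  have "(\<Sum>x\<in>I. v x * evec x z) = (\<Sum>x\<in>I. if x = z then v z else 0)"
    by (rule sum.cong) (auto simp: evec_def)
  also have "\<dots> = v z" using assms by (auto simp: Vs_def)
  finally show "v z = (\<Sum>x\<in>I. v x * evec x z)" by simp
qed

lemma addsub4: "(a::'a::ab_group_add) + b - (c + d) = (a - c) + (b - d)"
  by (simp add: algebra_simps)
lemma addadd4: "(a::'a::ab_semigroup_add) + b + (c + d) = (a + c) + (b + d)"
  by (simp add: algebra_simps)

lemma L1:
  fixes L :: "('i \<Rightarrow> 'a::division_ring) \<Rightarrow> ('j \<Rightarrow> 'a)"
  assumes "finite J" "finite I" "llin I L" "\<forall>v\<in>Vs I. L v \<in> Vs J"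
    "\<forall>v\<in>Vs I. L v = (\<lambda>_. 0) \<longrightarrow> v = (\<lambda>_. 0)"
  shows "card I \<le> card J"
  using assms
proof (induction J arbitrary: I L rule: finite_induct)
  case empty
  show ?case
  proof (cases "I = {}")
    case False
    then obtain x where x: "x \<in> I" by auto
    have "L (evec x) \<in> Vs {}" using empty Vs_evec[OF x] by auto
    then have "L (evec x) = (\<lambda>_. 0)" by (auto simp: Vs_def)
    then have "(evec x :: 'i \<Rightarrow> 'a) = (\<lambda>_. 0)" using empty Vs_evec[OF x] by auto
    then have "(evec x x :: 'a) = 0" by metis
    then show ?thesis by (simp add: evec_def)
  qed simp
next
  case (insert y J)
  show ?case
  proof (cases "\<forall>v\<in>Vs I. L v y = 0")
    case True
    have "\<forall>v\<in>Vs I. L v \<in> Vs J"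
    proof
      fix v :: "'i \<Rightarrow> 'a" assume v: "v \<in> Vs I"
      have "L v \<in> Vs (insert y J)" "L v y = 0" using v True insert.prems(3) by auto
      then show "L v \<in> Vs J" unfolding Vs_def by auto
    qed
    then have "card I \<le> card J" using insert by blast
    then show ?thesis using insert by simp
  next
    case False
    then obtain v0 where v0: "v0 \<in> Vs I" "L v0 y \<noteq> 0" by auto
    have "\<exists>x0\<in>I. L (evec x0) y \<noteq> 0"
    proof (rule ccontr)
      assume "\<not> ?thesis"
      then have z: "\<forall>x\<in>I. L (evec x) y = 0" by auto
      have "L v0 = L (\<lambda>z. \<Sum>x\<in>I. v0 x * evec x z)" using Vs_expand[OF insert.prems(1) v0(1)] by simp
      also have "\<dots> = (\<lambda>z. \<Sum>x\<in>I. L (\<lambda>w. v0 x * evec x w) z)"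
        by (rule llin_sum[OF insert.prems(2,1)]) (auto intro: Vs_scale Vs_evec)
      also have "\<dots> = (\<lambda>z. \<Sum>x\<in>I. v0 x * L (evec x) z)"
        using llin_scale[OF insert.prems(2) Vs_evec] by (intro ext sum.cong) auto
      finally have "L v0 y = (\<Sum>x\<in>I. v0 x * L (evec x) y)" by simp
      also have "\<dots> = 0" using z by simp
      finally show False using v0 by simp
    qed
    then obtain x0 where x0: "x0 \<in> I" "L (evec x0) y \<noteq> 0" by auto
    define w where "w = L (evec x0)"
    define c where "c = w y"
    have c: "c \<noteq> 0" using x0 by (simp add: c_def w_def)
    have wV: "w \<in> Vs (insert y J)" using insert.prems(3) Vs_evec[OF x0(1)] unfolding w_def by blast
    define L' where "L' = (\<lambda>v z. L v z - L v y * inverse c * w z)"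
    define I' where "I' = I - {x0}"
    have sub: "v \<in> Vs I' \<Longrightarrow> v \<in> Vs I" for v by (auto simp: Vs_def I'_def)
    have lin: "llin I' L'"
      unfolding llin_def
    proof (intro conjI ballI allI)
      fix u v :: "'i \<Rightarrow> 'a" assume uv: "u \<in> Vs I'" "v \<in> Vs I'"
      show "L' (\<lambda>x. u x + v x) = (\<lambda>y. L' u y + L' v y)"
        unfolding L'_def using llin_add[OF insert.prems(2) sub[OF uv(1)] sub[OF uv(2)]]
        by (intro ext) (simp add: distrib_right addsub4)
    next
      fix a and v :: "'i \<Rightarrow> 'a" assume v: "v \<in> Vs I'"
      show "L' (\<lambda>x. a * v x) = (\<lambda>y. a * L' v y)"
        unfolding L'_def using llin_scale[OF insert.prems(2) sub[OF v]]
        by (simp add: right_diff_distrib mult.assoc)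
    qed
    have maps: "\<forall>v\<in>Vs I'. L' v \<in> Vs J"
    proof
      fix v :: "'i \<Rightarrow> 'a" assume v: "v \<in> Vs I'"
      have Lv: "L v \<in> Vs (insert y J)" using insert.prems(3) sub[OF v] by auto
      show "L' v \<in> Vs J"
        unfolding Vs_def
      proof (intro allI impI CollectI)
        fix z assume z: "z \<notin> J"
        show "L' v z = 0"
        proof (cases "z = y")
          case True
          then show ?thesis using c by (simp add: L'_def c_def mult.assoc)
        next
          case False
          then show ?thesis using Lv wV z by (simp add: L'_def Vs_def)
        qed
      qed
    qed
    have ker: "\<forall>v\<in>Vs I'. L' v = (\<lambda>_. 0) \<longrightarrow> v = (\<lambda>_. 0)"
    proof (intro ballI impI)
      fix v :: "'i \<Rightarrow> 'a" assume v: "v \<in> Vs I'" and k: "L' v = (\<lambda>_. 0)"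
      define d where "d = L v y * inverse c"
      have e: "L v = (\<lambda>z. d * w z)"
      proof
        fix z
        have "L' v z = 0" using k by simp
        then have "L v z - L v y * inverse c * w z = 0" by (simp only: L'_def)
        then show "L v z = d * w z" by (simp add: d_def)
      qed
      have "L (\<lambda>x. v x - d * evec x0 x) = (\<lambda>z. L v z - d * w z)"
        using llin_diff[OF insert.prems(2) sub[OF v] Vs_scale[OF Vs_evec[OF x0(1)]]]
          llin_scale[OF insert.prems(2) Vs_evec[OF x0(1)], of d] by (simp add: w_def)
      also have "\<dots> = (\<lambda>_. 0)" using e by simp
      finally have L0: "L (\<lambda>x. v x - d * evec x0 x) = (\<lambda>_. 0)" .
      have "(\<lambda>x. v x - d * evec x0 x) \<in> Vs I"
        using sub[OF v] x0(1) by (auto simp: Vs_def evec_def)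
      then have z0: "(\<lambda>x. v x - d * evec x0 x) = (\<lambda>_. 0)"
        using insert.prems(4) L0 by blast
      have vv: "v x = d * evec x0 x" for x
        using fun_cong[OF z0, of x] by simp
      have "v x0 = 0" using v by (simp add: Vs_def I'_def)
      then have "d = 0" using vv[of x0] by (simp add: evec_def)
      then show "v = (\<lambda>_. 0)" using vv by auto
    qed
    have finI': "finite I'" using insert.prems(1) by (simp add: I'_def)
    have "card I' \<le> card J" by (rule insert.IH[OF finI' lin maps ker])
    moreover have "card I' = card I - 1" using x0(1) by (simp add: I'_def)
    moreover have "card (insert y J) = card J + 1" using insert(1,2) by simp
    moreover have "card I \<ge> 1" using x0(1) insert.prems(1) by (simp add: Suc_le_eq card_gt_0_iff) blast
    ultimately show ?thesis by linarith
  qed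
qed

lemma llin_apply_sum:
  assumes "llin I L" "finite K" "\<And>k. k \<in> K \<Longrightarrow> u k \<in> Vs I"
  shows "L (\<lambda>x. \<Sum>k\<in>K. c k * u k x) = (\<lambda>y. \<Sum>k\<in>K. c k * L (u k) y)"
proof -
  have "L (\<lambda>x. \<Sum>k\<in>K. c k * u k x) = (\<lambda>y. \<Sum>k\<in>K. L (\<lambda>x. c k * u k x) y)"
    by (rule llin_sum[OF assms(1,2)]) (auto intro: Vs_scale assms(3))
  also have "\<dots> = (\<lambda>y. \<Sum>k\<in>K. c k * L (u k) y)"
    using llin_scale[OF assms(1) assms(3)] by (intro ext sum.cong) auto
  finally show ?thesis .
qed

lemma L2:
  fixes L :: "('i \<Rightarrow> 'a::division_ring) \<Rightarrow> ('j \<Rightarrow> 'a)"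
  assumes "finite J" "finite I" "llin I L" "\<forall>v\<in>Vs I. L v \<in> Vs J"
    "Vs J \<subseteq> L ` Vs I"
  shows "card J \<le> card I"
proof -
  have ex: "\<exists>u. u \<in> Vs I \<and> L u = evec y" if y: "y \<in> J" for y
  proof -
    have "evec y \<in> Vs J" by (rule Vs_evec[OF y])
    then have "evec y \<in> L ` Vs I" using assms(5) by (rule subsetD[rotated])
    then obtain u where "u \<in> Vs I" "evec y = L u" by (rule imageE)
    then show ?thesis by metis
  qed
  have "\<forall>y\<in>J. \<exists>u. u \<in> Vs I \<and> L u = evec y" using ex by blast
  from bchoice[OF this] obtain u where u0: "\<forall>y\<in>J. u y \<in> Vs I \<and> L (u y) = evec y" by blast
  have u: "u y \<in> Vs I \<and> L (u y) = evec y" if "y \<in> J" for y using u0 that by blast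
  define G :: "('j \<Rightarrow> 'a) \<Rightarrow> ('i \<Rightarrow> 'a)" where "G = (\<lambda>c x. \<Sum>y\<in>J. c y * u y x)"
  have LG: "L (G c) = c" if c: "c \<in> Vs J" for c
  proof -
    have "L (G c) = (\<lambda>z. \<Sum>y\<in>J. c y * L (u y) z)"
      unfolding G_def by (rule llin_apply_sum[OF assms(3,1)]) (use u in auto)
    also have "\<dots> = (\<lambda>z. \<Sum>y\<in>J. c y * evec y z)" using u by (intro ext sum.cong) auto
    also have "\<dots> = c" using Vs_expand[OF assms(1) c] by simp
    finally show ?thesis .
  qed
  have lin: "llin J G"
    unfolding llin_def G_def
  proof (intro conjI ballI allI)
    fix c d :: "'j \<Rightarrow> 'a"
    show "(\<lambda>x. \<Sum>y\<in>J. (c y + d y) * u y x) = (\<lambda>x. (\<Sum>y\<in>J. c y * u y x) + (\<Sum>y\<in>J. d y * u y x))"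
      by (simp add: distrib_right sum.distrib)
  next
    fix a and c :: "'j \<Rightarrow> 'a"
    show "(\<lambda>x. \<Sum>y\<in>J. (a * c y) * u y x) = (\<lambda>x. a * (\<Sum>y\<in>J. c y * u y x))"
      by (simp add: sum_distrib_left mult.assoc)
  qed
  have maps: "\<forall>c\<in>Vs J. G c \<in> Vs I"
    unfolding G_def using u by (auto intro!: Vs_sum Vs_scale)
  have ker: "\<forall>c\<in>Vs J. G c = (\<lambda>_. 0) \<longrightarrow> c = (\<lambda>_. 0)"
  proof (intro ballI impI)
    fix c :: "'j \<Rightarrow> 'a" assume c: "c \<in> Vs J" and g: "G c = (\<lambda>_. 0)"
    have "c = L (G c)" using LG[OF c] by simp
    also have "\<dots> = (\<lambda>_. 0)" using g llin_zero[OF assms(3)] by simp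
    finally show "c = (\<lambda>_. 0)" .
  qed
  show ?thesis by (rule L1[OF assms(2,1) lin maps ker])
qed

lemma L3:
  fixes L :: "('i \<Rightarrow> 'a::division_ring) \<Rightarrow> ('j \<Rightarrow> 'a)"
  assumes "finite J" "finite I" "card J \<le> card I" "llin I L" "\<forall>v\<in>Vs I. L v \<in> Vs J"
    "\<forall>v\<in>Vs I. L v = (\<lambda>_. 0) \<longrightarrow> v = (\<lambda>_. 0)"
  shows "Vs J \<subseteq> L ` Vs I"
proof (rule ccontr)
  assume "\<not> ?thesis"
  then obtain w where w: "w \<in> Vs J" "w \<notin> L ` Vs I" by auto
  define I' :: "'i option set" where "I' = insert None (Some ` I)"
  define L' where "L' = (\<lambda>v z. L (\<lambda>x. v (Some x)) z + v None * w z)"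
  have sub: "(\<lambda>x. v (Some x)) \<in> Vs I" if "v \<in> Vs I'" for v :: "'i option \<Rightarrow> 'a"
    using that by (auto simp: Vs_def I'_def)
  have lin: "llin I' L'"
    unfolding llin_def
  proof (intro conjI ballI allI)
    fix u v :: "'i option \<Rightarrow> 'a" assume uv: "u \<in> Vs I'" "v \<in> Vs I'"
    show "L' (\<lambda>x. u x + v x) = (\<lambda>y. L' u y + L' v y)"
      unfolding L'_def using llin_add[OF assms(4) sub[OF uv(1)] sub[OF uv(2)]]
      by (intro ext) (simp add: distrib_right addadd4)
  next
    fix a and v :: "'i option \<Rightarrow> 'a" assume v: "v \<in> Vs I'"
    show "L' (\<lambda>x. a * v x) = (\<lambda>y. a * L' v y)"
      unfolding L'_def using llin_scale[OF assms(4) sub[OF v]]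
      by (simp add: distrib_left mult.assoc)
  qed
  have maps: "\<forall>v\<in>Vs I'. L' v \<in> Vs J"
    using assms(5) sub w(1) by (auto simp: Vs_def L'_def)
  have ker: "\<forall>v\<in>Vs I'. L' v = (\<lambda>_. 0) \<longrightarrow> v = (\<lambda>_. 0)"
  proof (intro ballI impI)
    fix v :: "'i option \<Rightarrow> 'a" assume v: "v \<in> Vs I'" and k: "L' v = (\<lambda>_. 0)"
    have vN: "v None = 0"
    proof (rule ccontr)
      assume nz: "v None \<noteq> 0"
      define d where "d = - inverse (v None)"
      have "L (\<lambda>x. d * v (Some x)) = (\<lambda>z. d * L (\<lambda>x. v (Some x)) z)"
        by (rule llin_scale[OF assms(4) sub[OF v]])
      also have "\<dots> = w"
      proof
        fix z
        have "L (\<lambda>x. v (Some x)) z = - (v None * w z)" using fun_cong[OF k, of z]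
          by (simp add: L'_def add_eq_0_iff)
        then show "d * L (\<lambda>x. v (Some x)) z = w z"
          using nz by (simp add: d_def mult.assoc[symmetric])
      qed
      finally show False using w(2) Vs_scale[OF sub[OF v]] by blast
    qed
    have "L (\<lambda>x. v (Some x)) = (\<lambda>_. 0)" using k vN by (simp add: L'_def)
    then have "(\<lambda>x. v (Some x)) = (\<lambda>_. 0)" using assms(6) sub[OF v] by blast
    then show "v = (\<lambda>_. 0)" using vN by (metis not_None_eq)
  qed
  have "card I' \<le> card J" by (rule L1[OF assms(1) _ lin maps ker]) (use assms(2) in \<open>simp add: I'_def\<close>)
  moreover have "card I' = card I + 1" using assms(2) by (simp add: I'_def card_image)
  ultimately show False using assms(3) by simp
qed

lemma coeff_lsmult [simp]: "coeff (lsmult a p) n = a * coeff p n"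
  by (simp add: lsmult_def coeff_map_poly)
lemma lsmult_add: "lsmult a (p + q) = lsmult a p + lsmult a q"
  by (rule poly_eqI) (simp add: distrib_left)
lemma lsmult_add_left: "lsmult (a + b) p = lsmult a p + lsmult b p"
  by (rule poly_eqI) (simp add: distrib_right)
lemma lsmult_lsmult: "lsmult a (lsmult b p) = lsmult (a * b) p"
  by (rule poly_eqI) (simp add: mult.assoc)
lemma lsmult_0 [simp]: "lsmult 0 p = 0" by (rule poly_eqI) simp
lemma lsmult_0_right [simp]: "lsmult a 0 = 0" by (rule poly_eqI) simp
lemma lsmult_1 [simp]: "lsmult 1 p = p" by (rule poly_eqI) simp
lemma lsmult_minus: "lsmult a (- p) = - lsmult a p" by (rule poly_eqI) simp
lemma lsmult_diff: "lsmult a (p - q) = lsmult a p - lsmult a q"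
  by (rule poly_eqI) (simp add: right_diff_distrib)
lemma lsmult_sum: "lsmult a (\<Sum>k\<in>K. f k) = (\<Sum>k\<in>K. lsmult a (f k))"
  by (rule poly_eqI) (simp add: coeff_sum sum_distrib_left)
lemma degree_lsmult_le: "degree (lsmult a p) \<le> degree p"
  by (rule degree_le) (simp add: coeff_eq_0)
lemma coeff_xshift: "coeff (xshift j p) n = (if n < j then 0 else coeff p (n - j))"
  by (induction j arbitrary: n) (auto simp: xshift_def coeff_pCons split: nat.splits)
lemma xshift_Suc: "xshift (Suc j) p = pCons 0 (xshift j p)"
  by (simp add: xshift_def)
lemma xshift_const: "xshift j [:b:] = monom b j"
  by (rule poly_eqI) (auto simp: coeff_xshift coeff_pCons split: nat.splits)

locale skewctx =
  fixes \<sigma> \<delta> :: "'a::division_ring \<Rightarrow> 'a"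
  assumes endo: "ring_endo \<sigma>" and der: "sigma_derivation \<sigma> \<delta>"
begin

lemma s_add: "\<sigma> (a + b) = \<sigma> a + \<sigma> b" using endo by (simp add: ring_endo_def)
lemma s_mult: "\<sigma> (a * b) = \<sigma> a * \<sigma> b" using endo by (simp add: ring_endo_def)
lemma s_1 [simp]: "\<sigma> 1 = 1" using endo by (simp add: ring_endo_def)
lemma s_0 [simp]: "\<sigma> 0 = 0" using s_add[of 0 0] by simp
lemma d_add: "\<delta> (a + b) = \<delta> a + \<delta> b" using der by (simp add: sigma_derivation_def)
lemma d_mult: "\<delta> (a * b) = \<sigma> a * \<delta> b + \<delta> a * b" using der by (simp add: sigma_derivation_def)
lemma d_0 [simp]: "\<delta> 0 = 0" using d_add[of 0 0] by simp
lemma s_nz: "a \<noteq> 0 \<Longrightarrow> \<sigma> a \<noteq> 0"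
  using s_mult[of a "inverse a"] by auto
lemma s_pow_nz: "a \<noteq> 0 \<Longrightarrow> (\<sigma> ^^ i) a \<noteq> 0"
  by (induction i) (auto simp: s_nz)

definition Xop :: "'a poly \<Rightarrow> 'a poly" where
  "Xop G = pCons 0 (map_poly \<sigma> G) + map_poly \<delta> G"

lemma coeff_Xop: "coeff (Xop G) n = (case n of 0 \<Rightarrow> 0 | Suc m \<Rightarrow> \<sigma> (coeff G m)) + \<delta> (coeff G n)"
  by (simp add: Xop_def coeff_pCons coeff_map_poly split: nat.splits)

lemma Xop_add: "Xop (G + H) = Xop G + Xop H"
  by (rule poly_eqI) (simp add: coeff_Xop s_add d_add split: nat.splits)
lemma Xop_0 [simp]: "Xop 0 = 0"
  by (rule poly_eqI) (simp add: coeff_Xop split: nat.splits)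
lemma Xop_sum: "Xop (\<Sum>k\<in>K. f k) = (\<Sum>k\<in>K. Xop (f k))"
  by (induction K rule: infinite_finite_induct) (auto simp: Xop_add)
lemma Xpow_add: "(Xop ^^ i) (G + H) = (Xop ^^ i) G + (Xop ^^ i) H"
  by (induction i) (auto simp: Xop_add)
lemma Xpow_0 [simp]: "(Xop ^^ i) 0 = 0"
  by (induction i) auto
lemma Xpow_sum: "(Xop ^^ i) (\<Sum>k\<in>K. f k) = (\<Sum>k\<in>K. (Xop ^^ i) (f k))"
  by (induction K rule: infinite_finite_induct) (auto simp: Xpow_add)
lemma Xop_lsmult: "Xop (lsmult a G) = lsmult (\<sigma> a) (Xop G) + lsmult (\<delta> a) G"
  by (rule poly_eqI) (simp add: coeff_Xop s_mult d_mult distrib_left add.assoc split: nat.splits)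
lemma Xop_pCons0: "Xop (pCons 0 p) = pCons 0 (Xop p)"
  by (rule poly_eqI) (simp add: coeff_Xop coeff_pCons split: nat.splits)
lemma Xop_xshift: "Xop (xshift j p) = xshift j (Xop p)"
  by (induction j) (auto simp: xshift_Suc Xop_pCons0 xshift_def)
lemma Xpow_xshift: "(Xop ^^ i) (xshift j p) = xshift j ((Xop ^^ i) p)"
  by (induction i) (auto simp: Xop_xshift)
lemma xpow_mul_eq: "xpow_mul \<sigma> \<delta> i b = (Xop ^^ i) [:b:]"
  by (induction i) (auto simp: Xop_def)

definition M :: "'a poly \<Rightarrow> 'a poly \<Rightarrow> 'a poly" where
  "M F H = (\<Sum>i\<le>degree F. lsmult (coeff F i) ((Xop ^^ i) H))"

lemma skew_mult_eq: "skew_mult \<sigma> \<delta> F G = M F G"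
proof -
  have "skew_mult \<sigma> \<delta> F G = (\<Sum>i\<le>degree F. lsmult (coeff F i) (\<Sum>j\<le>degree G. xshift j ((Xop ^^ i) [:coeff G j:])))"
    by (simp add: skew_mult_def lsmult_sum xpow_mul_eq)
  also have "\<dots> = (\<Sum>i\<le>degree F. lsmult (coeff F i) ((Xop ^^ i) (\<Sum>j\<le>degree G. xshift j [:coeff G j:])))"
    by (simp add: Xpow_sum Xpow_xshift)
  also have "\<dots> = M F G"
    by (simp add: xshift_const poly_as_sum_of_monoms M_def)
  finally show ?thesis .
qed

lemma M_bound:
  assumes "degree F \<le> d"
  shows "M F H = (\<Sum>i\<le>d. lsmult (coeff F i) ((Xop ^^ i) H))"
proof -
  have "(\<Sum>i\<le>d. lsmult (coeff F i) ((Xop ^^ i) H)) =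
        (\<Sum>i\<le>degree F. lsmult (coeff F i) ((Xop ^^ i) H)) + (\<Sum>i\<in>{..d} - {..degree F}. lsmult (coeff F i) ((Xop ^^ i) H))"
    using assms by (subst sum.subset_diff[of "{..degree F}"]) auto
  also have "(\<Sum>i\<in>{..d} - {..degree F}. lsmult (coeff F i) ((Xop ^^ i) H)) = 0"
    by (rule sum.neutral) (auto simp: coeff_eq_0)
  finally show ?thesis by (simp add: M_def)
qed

lemma M_add_left: "M (F + G) H = M F H + M G H"
proof -
  define d where "d = max (degree F) (degree G)"
  have "degree (F + G) \<le> d" "degree F \<le> d" "degree G \<le> d"
    using degree_add_le_max[of F G] by (auto simp: d_def)
  then show ?thesis
    by (simp add: M_bound lsmult_add_left sum.distrib)
qed

lemma M_0_left [simp]: "M 0 H = 0" by (simp add: M_def)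
lemma M_0_right [simp]: "M F 0 = 0" by (simp add: M_def)

lemma M_lsmult_left: "M (lsmult a F) H = lsmult a (M F H)"
proof -
  have "M (lsmult a F) H = (\<Sum>i\<le>degree F. lsmult (coeff (lsmult a F) i) ((Xop ^^ i) H))"
    by (rule M_bound[OF degree_lsmult_le])
  also have "\<dots> = lsmult a (M F H)" unfolding M_def by (simp add: lsmult_sum lsmult_lsmult)
  finally show ?thesis .
qed

lemma M_minus_left: "M (- F) H = - M F H"
  using M_add_left[of F "-F" H] by (simp add: minus_unique)
lemma M_diff_left: "M (F - G) H = M F H - M G H"
  using M_add_left[of F "-G" H] M_minus_left[of G H] by simp
lemma M_sum_left: "M (\<Sum>k\<in>K. f k) H = (\<Sum>k\<in>K. M (f k) H)"
  by (induction K rule: infinite_finite_induct) (auto simp: M_add_left)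

lemma M_monom: "M (monom c k) H = lsmult c ((Xop ^^ k) H)"
proof -
  have "M (monom c k) H = (\<Sum>i\<le>k. lsmult (coeff (monom c k) i) ((Xop ^^ i) H))"
    by (rule M_bound[OF degree_monom_le])
  also have "\<dots> = (\<Sum>i\<le>k. if i = k then lsmult c ((Xop ^^ i) H) else 0)"
    by (rule sum.cong) auto
  finally show ?thesis by simp
qed

lemma M_pCons0: "M (pCons 0 P) H = M P (Xop H)"
proof -
  have d: "degree (pCons 0 P) \<le> Suc (degree P)" by (simp add: degree_pCons_le)
  have "M (pCons 0 P) H = (\<Sum>i\<le>Suc (degree P). lsmult (coeff (pCons 0 P) i) ((Xop ^^ i) H))"
    by (rule M_bound[OF d])
  also have "\<dots> = (\<Sum>i\<le>degree P. lsmult (coeff P i) ((Xop ^^ Suc i) H))"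
    by (subst sum.atMost_Suc_shift) simp
  also have "\<dots> = M P (Xop H)"
    by (simp add: M_def funpow_Suc_right del: funpow.simps)
  finally show ?thesis .
qed

lemma M_Xop_left: "M (Xop K) H = Xop (M K H)"
proof -
  have d1: "degree (map_poly \<sigma> K) \<le> degree K" "degree (map_poly \<delta> K) \<le> degree K"
    by (auto intro!: degree_le simp: coeff_map_poly coeff_eq_0)
  have "M (Xop K) H = M (map_poly \<sigma> K) (Xop H) + M (map_poly \<delta> K) H"
    by (simp add: Xop_def M_add_left M_pCons0)
  also have "\<dots> = (\<Sum>i\<le>degree K. lsmult (\<sigma> (coeff K i)) ((Xop ^^ i) (Xop H))) +
                  (\<Sum>i\<le>degree K. lsmult (\<delta> (coeff K i)) ((Xop ^^ i) H))"
    by (simp add: M_bound[OF d1(1)] M_bound[OF d1(2)] coeff_map_poly)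
  also have "\<dots> = Xop (M K H)"
    by (simp add: M_def Xop_sum Xop_lsmult sum.distrib funpow_swap1)
  finally show ?thesis .
qed

lemma M_Xpow_left: "M ((Xop ^^ i) K) H = (Xop ^^ i) (M K H)"
  by (induction i) (auto simp: M_Xop_left)

lemma M_assoc: "M (M F G) H = M F (M G H)"
proof -
  have "M (M F G) H = M (\<Sum>i\<le>degree F. lsmult (coeff F i) ((Xop ^^ i) G)) H"
    by (simp only: M_def[of F G])
  also have "\<dots> = (\<Sum>i\<le>degree F. lsmult (coeff F i) ((Xop ^^ i) (M G H)))"
    by (simp add: M_sum_left M_lsmult_left M_Xpow_left)
  also have "\<dots> = M F (M G H)" by (simp only: M_def[of F "M G H"])
  finally show ?thesis .
qed

end

lemma deg_less_iff: "F \<in> deg_less d \<longleftrightarrow> (\<forall>n\<ge>d. coeff F n = 0)"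
proof
  assume "F \<in> deg_less d"
  then show "\<forall>n\<ge>d. coeff F n = 0" by (auto simp: deg_less_def coeff_eq_0)
next
  assume h: "\<forall>n\<ge>d. coeff F n = 0"
  show "F \<in> deg_less d"
  proof (cases "F = 0")
    case False
    then have "coeff F (degree F) \<noteq> 0" by simp
    then have "degree F < d" using h by (meson not_le)
    then show ?thesis by (simp add: deg_less_def)
  qed (simp add: deg_less_def)
qed

lemma deg_less_add: "F \<in> deg_less d \<Longrightarrow> G \<in> deg_less d \<Longrightarrow> F + G \<in> deg_less d"
  by (simp add: deg_less_iff)
lemma deg_less_diff: "F \<in> deg_less d \<Longrightarrow> G \<in> deg_less d \<Longrightarrow> F - G \<in> deg_less d"
  by (simp add: deg_less_iff)
lemma deg_less_lsmult: "F \<in> deg_less d \<Longrightarrow> lsmult a F \<in> deg_less d"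
  by (simp add: deg_less_iff)
lemma deg_less_0: "0 \<in> deg_less d"
  by (simp add: deg_less_def)

lemma degree_lt_if_top0: "p \<noteq> 0 \<Longrightarrow> degree p \<le> d \<Longrightarrow> coeff p d = 0 \<Longrightarrow> degree p < d"
  by (metis le_neq_implies_less leading_coeff_0_iff)

context skewctx
begin

lemma degree_Xop: "G \<noteq> 0 \<Longrightarrow> degree (Xop G) = Suc (degree G) \<and> lead_coeff (Xop G) = \<sigma> (lead_coeff G)"
proof -
  assume G: "G \<noteq> 0"
  have top: "coeff (Xop G) (Suc (degree G)) = \<sigma> (lead_coeff G)"
    by (simp add: coeff_Xop coeff_eq_0)
  have "degree (Xop G) \<le> Suc (degree G)"
    by (rule degree_le) (auto simp: coeff_Xop coeff_eq_0 split: nat.splits)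
  moreover have "Suc (degree G) \<le> degree (Xop G)"
    using top G s_nz by (intro le_degree) simp
  ultimately show ?thesis using top by simp
qed

lemma degree_Xpow: "G \<noteq> 0 \<Longrightarrow> degree ((Xop ^^ i) G) = degree G + i \<and> lead_coeff ((Xop ^^ i) G) = (\<sigma> ^^ i) (lead_coeff G)"
proof (induction i)
  case 0 then show ?case by simp
next
  case (Suc i)
  have "(Xop ^^ i) G \<noteq> 0"
    using Suc s_pow_nz[of "lead_coeff G" i] by auto
  then have "degree (Xop ((Xop ^^ i) G)) = Suc (degree ((Xop ^^ i) G))"
    "lead_coeff (Xop ((Xop ^^ i) G)) = \<sigma> (lead_coeff ((Xop ^^ i) G))"
    using degree_Xop by blast+
  note h = this
  have IH: "degree ((Xop ^^ i) G) = degree G + i" "lead_coeff ((Xop ^^ i) G) = (\<sigma> ^^ i) (lead_coeff G)"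
    using Suc by auto
  show ?case
  proof
    show "degree ((Xop ^^ Suc i) G) = degree G + Suc i" using h IH by simp
    have "lead_coeff ((Xop ^^ Suc i) G) = \<sigma> (lead_coeff ((Xop ^^ i) G))" using h(2) by simp
    also have "\<dots> = \<sigma> ((\<sigma> ^^ i) (lead_coeff G))" by (rule arg_cong[OF IH(2)])
    finally show "lead_coeff ((Xop ^^ Suc i) G) = (\<sigma> ^^ Suc i) (lead_coeff G)" by simp
  qed
qed

lemma M_degree:
  assumes F: "F \<noteq> 0" and G: "G \<noteq> 0"
  shows "degree (M F G) = degree F + degree G \<and> lead_coeff (M F G) = lead_coeff F * (\<sigma> ^^ degree F) (lead_coeff G)"
proof -
  have key: "coeff (M F G) n = lead_coeff F * coeff ((Xop ^^ degree F) G) n" if n: "n \<ge> degree F + degree G" for n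
  proof -
    have "coeff (M F G) n = (\<Sum>i\<le>degree F. coeff F i * coeff ((Xop ^^ i) G) n)"
      by (simp add: M_def coeff_sum)
    also have "\<dots> = (\<Sum>i\<le>degree F. if i = degree F then lead_coeff F * coeff ((Xop ^^ degree F) G) n else 0)"
    proof (rule sum.cong)
      fix i assume i: "i \<in> {..degree F}"
      show "coeff F i * coeff ((Xop ^^ i) G) n = (if i = degree F then lead_coeff F * coeff ((Xop ^^ degree F) G) n else 0)"
      proof (cases "i = degree F")
        case False
        then have "degree ((Xop ^^ i) G) < n" using i n degree_Xpow[OF G, of i] by auto
        then show ?thesis using False by (simp add: coeff_eq_0)
      qed simp
    qed simp
    finally show ?thesis by simp
  qed
  have dX: "degree ((Xop ^^ degree F) G) = degree F + degree G"
    and lX: "lead_coeff ((Xop ^^ degree F) G) = (\<sigma> ^^ degree F) (lead_coeff G)"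
    using degree_Xpow[OF G, of "degree F"] by auto
  have "degree (M F G) \<le> degree F + degree G"
    by (rule degree_le) (auto simp: key coeff_eq_0 dX)
  moreover have top: "coeff (M F G) (degree F + degree G) = lead_coeff F * (\<sigma> ^^ degree F) (lead_coeff G)"
    using key[of "degree F + degree G"] dX lX by (simp add: add.commute)
  moreover have "lead_coeff F * (\<sigma> ^^ degree F) (lead_coeff G) \<noteq> 0"
    using F G s_pow_nz by simp
  ultimately have "degree (M F G) = degree F + degree G"
    by (metis le_antisym le_degree)
  then show ?thesis using top by simp
qed

lemma M_nz: "F \<noteq> 0 \<Longrightarrow> G \<noteq> 0 \<Longrightarrow> M F G \<noteq> 0"
proof -
  assume F: "F \<noteq> 0" and G: "G \<noteq> 0"
  have "(\<sigma> ^^ degree F) (lead_coeff G) \<noteq> 0" using s_pow_nz G by simp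
  moreover have e: "lead_coeff (M F G) = lead_coeff F * (\<sigma> ^^ degree F) (lead_coeff G)"
    using M_degree[OF F G] by blast
  ultimately have "lead_coeff (M F G) \<noteq> 0" unfolding e using F by simp
  then show ?thesis by auto
qed

lemma divide: "P \<noteq> 0 \<Longrightarrow> \<exists>Q R. F = M Q P + R \<and> R \<in> deg_less (degree P)"
proof (induction "degree F" arbitrary: F rule: less_induct)
  case less
  show ?case
  proof (cases "F = 0 \<or> degree F < degree P")
    case True
    then show ?thesis by (intro exI[of _ 0] exI[of _ F]) (auto simp: deg_less_def)
  next
    case False
    then have F: "F \<noteq> 0" "degree P \<le> degree F" by auto
    define k where "k = degree F - degree P"
    define a where "a = lead_coeff F * inverse ((\<sigma> ^^ k) (lead_coeff P))"
    have lP: "(\<sigma> ^^ k) (lead_coeff P) \<noteq> 0" using less.prems s_pow_nz by simp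
    have a: "a \<noteq> 0" using F lP by (simp add: a_def)
    define S where "S = M (monom a k) P"
    have mk: "monom a k \<noteq> 0" "degree (monom a k) = k" "lead_coeff (monom a k) = a"
      using a by (auto simp: degree_monom_eq)
    have dS: "degree S = degree F" and lS: "lead_coeff S = lead_coeff F"
      using M_degree[OF mk(1) less.prems] mk F lP by (auto simp: S_def k_def a_def mult.assoc)
    define F' where "F' = F - S"
    have top: "coeff F' (degree F) = 0" using dS lS by (simp add: F'_def)
    have dF': "degree F' \<le> degree F" using degree_diff_le_max[of F S] dS by (simp add: F'_def)
    show ?thesis
    proof (cases "F' = 0")
      case True
      then have "F = M (monom a k) P + 0" by (simp add: F'_def S_def)
      then show ?thesis using deg_less_0 by blast
    next
      case False
      then have "degree F' < degree F" using degree_lt_if_top0[OF False dF' top] by simp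
      from less.hyps[OF this less.prems] obtain Q R where QR: "F' = M Q P + R" "R \<in> deg_less (degree P)"
        by blast
      then have "F = M (Q + monom a k) P + R"
        by (simp add: M_add_left F'_def S_def algebra_simps)
      then show ?thesis using QR by blast
    qed
  qed
qed

lemma div_unique:
  assumes P: "P \<noteq> 0" and e: "M Q P + R = M Q' P + R'"
    and R: "R \<in> deg_less (degree P)" and R': "R' \<in> deg_less (degree P)"
  shows "Q = Q' \<and> R = R'"
proof -
  have eq: "M (Q - Q') P = R' - R" using e by (simp add: M_diff_left algebra_simps)
  have d: "R' - R \<in> deg_less (degree P)" by (rule deg_less_diff[OF R' R])
  have "Q = Q'"
  proof (rule ccontr)
    assume "Q \<noteq> Q'"
    then have nz: "Q - Q' \<noteq> 0" by simp
    have "M (Q - Q') P \<noteq> 0" by (rule M_nz[OF nz P])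
    moreover have "degree (M (Q - Q') P) \<ge> degree P" using M_degree[OF nz P] by simp
    ultimately show False using d eq by (auto simp: deg_less_def)
  qed
  then show ?thesis using e by simp
qed

lemma rem_eq:
  assumes "P \<noteq> 0" "F = M Q P + R" "R \<in> deg_less (degree P)"
  shows "skew_rem \<sigma> \<delta> F P = R"
  unfolding skew_rem_def skew_mult_eq
proof (rule the_equality)
  show "R \<in> deg_less (degree P) \<and> (\<exists>Q. F = M Q P + R)" using assms by blast
next
  fix R' assume "R' \<in> deg_less (degree P) \<and> (\<exists>Q. F = M Q P + R')"
  then show "R' = R" using div_unique[OF assms(1)] assms by metis
qed

lemma rem_props:
  assumes "P \<noteq> 0"
  shows "skew_rem \<sigma> \<delta> F P \<in> deg_less (degree P)" "\<exists>Q. F = M Q P + skew_rem \<sigma> \<delta> F P"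
  using divide[OF assms, of F] rem_eq[OF assms] by metis+

lemma rem_add: "P \<noteq> 0 \<Longrightarrow> skew_rem \<sigma> \<delta> (F + G) P = skew_rem \<sigma> \<delta> F P + skew_rem \<sigma> \<delta> G P"
proof -
  assume P: "P \<noteq> 0"
  obtain Q1 Q2 where "F = M Q1 P + skew_rem \<sigma> \<delta> F P" "G = M Q2 P + skew_rem \<sigma> \<delta> G P"
    using rem_props(2)[OF P] by metis
  then have "F + G = M (Q1 + Q2) P + (skew_rem \<sigma> \<delta> F P + skew_rem \<sigma> \<delta> G P)"
    by (simp add: M_add_left algebra_simps)
  then show ?thesis by (rule rem_eq[OF P]) (intro deg_less_add rem_props(1)[OF P])
qed

lemma rem_lsmult: "P \<noteq> 0 \<Longrightarrow> skew_rem \<sigma> \<delta> (lsmult a F) P = lsmult a (skew_rem \<sigma> \<delta> F P)"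
proof -
  assume P: "P \<noteq> 0"
  obtain Q where "F = M Q P + skew_rem \<sigma> \<delta> F P" using rem_props(2)[OF P] by metis
  then have "lsmult a F = M (lsmult a Q) P + lsmult a (skew_rem \<sigma> \<delta> F P)"
    by (metis M_lsmult_left lsmult_add)
  then show ?thesis by (rule rem_eq[OF P]) (intro deg_less_lsmult rem_props(1)[OF P])
qed

lemma rem_zero_iff: "P \<noteq> 0 \<Longrightarrow> skew_rem \<sigma> \<delta> F P = 0 \<longleftrightarrow> (\<exists>Q. F = M Q P)"
  using rem_props[of P F] rem_eq[of P F _ 0] deg_less_0 by fastforce

lemma rem_0: "P \<noteq> 0 \<Longrightarrow> skew_rem \<sigma> \<delta> 0 P = 0"
  using rem_zero_iff[of P 0] by (metis M_0_left)

lemma I_iff: "F \<in> skew_I \<sigma> \<delta> \<Omega> \<longleftrightarrow> (\<forall>P\<in>\<Omega>. \<exists>Q. F = M Q P)"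
  by (simp add: skew_I_def skew_mult_eq)

lemma I_0: "0 \<in> skew_I \<sigma> \<delta> \<Omega>"
  by (simp add: I_iff) (metis M_0_left)
lemma I_diff: "F \<in> skew_I \<sigma> \<delta> \<Omega> \<Longrightarrow> G \<in> skew_I \<sigma> \<delta> \<Omega> \<Longrightarrow> F - G \<in> skew_I \<sigma> \<delta> \<Omega>"
  by (simp add: I_iff) (metis M_diff_left)
lemma I_lsmult: "F \<in> skew_I \<sigma> \<delta> \<Omega> \<Longrightarrow> lsmult a F \<in> skew_I \<sigma> \<delta> \<Omega>"
  by (simp add: I_iff) (metis M_lsmult_left)
lemma I_mult: "F \<in> skew_I \<sigma> \<delta> \<Omega> \<Longrightarrow> M Q F \<in> skew_I \<sigma> \<delta> \<Omega>"
  by (simp add: I_iff) (metis M_assoc)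

lemma skew_F_props:
  assumes "skew_I \<sigma> \<delta> \<Omega> \<noteq> {0}"
  shows "skew_F \<sigma> \<delta> \<Omega> \<in> skew_I \<sigma> \<delta> \<Omega> \<and> skew_F \<sigma> \<delta> \<Omega> \<noteq> 0 \<and>
         (\<forall>G\<in>skew_I \<sigma> \<delta> \<Omega>. G \<noteq> 0 \<longrightarrow> degree (skew_F \<sigma> \<delta> \<Omega>) \<le> degree G)"
proof -
  let ?I = "skew_I \<sigma> \<delta> \<Omega>"
  obtain G where G: "G \<in> ?I" "G \<noteq> 0" using assms I_0 by blast
  define d where "d = (LEAST d. \<exists>G\<in>?I. G \<noteq> 0 \<and> degree G = d)"
  have "\<exists>G\<in>?I. G \<noteq> 0 \<and> degree G = d"
    unfolding d_def by (rule LeastI[of _ "degree G"]) (use G in blast)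
  then obtain G0 where G0: "G0 \<in> ?I" "G0 \<noteq> 0" "degree G0 = d" by blast
  have min: "d \<le> degree H" if "H \<in> ?I" "H \<noteq> 0" for H
    unfolding d_def by (rule Least_le) (use that in blast)
  define F0 where "F0 = lsmult (inverse (lead_coeff G0)) G0"
  have lc: "coeff G0 d \<noteq> 0" using G0(2,3) by (metis leading_coeff_0_iff)
  have c: "coeff F0 d = 1" using lc G0(3) by (simp add: F0_def left_inverse)
  have F0I: "F0 \<in> ?I" using G0 I_lsmult by (simp add: F0_def)
  have F0nz: "F0 \<noteq> 0" using c by auto
  have dF0: "degree F0 = d"
    using degree_lsmult_le[of _ G0] G0 c le_degree[of F0 d] unfolding F0_def
    by (metis le_antisym one_neq_zero)
  have P0: "F0 \<in> ?I \<and> F0 \<noteq> 0 \<and> lead_coeff F0 = 1 \<and> (\<forall>G\<in>?I. G \<noteq> 0 \<longrightarrow> degree F0 \<le> degree G)"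
    using F0I F0nz dF0 c min by auto
  have "skew_F \<sigma> \<delta> \<Omega> = (THE F. F \<in> ?I \<and> F \<noteq> 0 \<and> lead_coeff F = 1 \<and> (\<forall>G\<in>?I. G \<noteq> 0 \<longrightarrow> degree F \<le> degree G))"
    using assms by (simp add: skew_F_def)
  also have "\<dots> = F0"
  proof (rule the_equality)
    fix F1 assume F1: "F1 \<in> ?I \<and> F1 \<noteq> 0 \<and> lead_coeff F1 = 1 \<and> (\<forall>G\<in>?I. G \<noteq> 0 \<longrightarrow> degree F1 \<le> degree G)"
    have dF1: "degree F1 = d" using F1 P0 dF0 by (meson le_antisym)
    show "F1 = F0"
    proof (rule ccontr)
      assume ne: "F1 \<noteq> F0"
      have D: "F1 - F0 \<in> ?I" using F1 F0I I_diff by blast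
      have "degree (F1 - F0) < d"
        using degree_lt_if_top0[of "F1 - F0" d] ne degree_diff_le_max[of F1 F0] dF1 dF0 F1 c
        by simp
      then show False using min[OF D] ne by simp
    qed
  qed (use P0 in blast)
  finally show ?thesis using P0 by simp
qed

end

lemma coeff_dec1: "coeff (Poly (map v [0..<N])) k = (if k < N then v k else 0)"
  by (simp add: nth_default_nth nth_default_beyond)

theorem mainTheorem3:
  fixes \<sigma> \<delta> :: "'a::division_ring \<Rightarrow> 'a" and Ps :: "'a poly list"
  assumes "ring_endo \<sigma>" and "sigma_derivation \<sigma> \<delta>"
    and "distinct Ps" and "\<forall>P\<in>set Ps. degree P \<ge> 1"
    and "skew_I \<sigma> \<delta> (set Ps) \<noteq> {0}"
  defines "n \<equiv> length Ps"
    and "N \<equiv> degree (skew_F \<sigma> \<delta> (set Ps))"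
    and "\<phi> \<equiv> (\<lambda>F. \<lambda>i\<in>{..<length Ps}. skew_rem \<sigma> \<delta> F (Ps ! i))"
  shows "(P_independent \<sigma> \<delta> (set Ps)
            \<longleftrightarrow> (left_linear_on (deg_less N) n \<phi> \<and>
                 bij_betw \<phi> (deg_less N) (\<Pi>\<^sub>E i\<in>{..<n}. deg_less (degree (Ps ! i)))))
       \<and> (P_independent \<sigma> \<delta> (set Ps)
            \<longleftrightarrow> \<phi> ` UNIV = (\<Pi>\<^sub>E i\<in>{..<n}. deg_less (degree (Ps ! i))))"
proof -
  interpret skewctx \<sigma> \<delta> using assms(1,2) by unfold_locales
  note n_def = assms(6) and N_def = assms(7) and phi_def = assms(8)
  let ?I = "skew_I \<sigma> \<delta> (set Ps)"
  let ?FO = "skew_F \<sigma> \<delta> (set Ps)"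
  let ?T = "\<Pi>\<^sub>E i\<in>{..<n}. deg_less (degree (Ps ! i))"
  have Pnz: "Ps ! i \<noteq> 0" if "i < n" for i
  proof
    assume z: "Ps ! i = 0"
    have "Ps ! i \<in> set Ps" using that by (simp add: n_def)
    then have "1 \<le> degree (Ps ! i)" using assms(4) by blast
    then show False using z by simp
  qed
  have Pnz': "Ps ! i \<noteq> 0" if "i < length Ps" for i using Pnz that by (simp add: n_def)
  have FO: "?FO \<in> ?I" "?FO \<noteq> 0" "\<And>G. G \<in> ?I \<Longrightarrow> G \<noteq> 0 \<Longrightarrow> N \<le> degree G"
    using skew_F_props[OF assms(5)] by (auto simp: N_def)
  have phi_i: "\<phi> F i = skew_rem \<sigma> \<delta> F (Ps ! i)" if "i < n" for F i
    using that by (simp add: phi_def n_def)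
  have phi_in: "\<phi> F \<in> ?T" for F
    unfolding phi_def n_def restrict_PiE_iff using rem_props(1)[OF Pnz'] by blast
  have rem_diff: "skew_rem \<sigma> \<delta> (F - G) (Ps ! i) = skew_rem \<sigma> \<delta> F (Ps ! i) - skew_rem \<sigma> \<delta> G (Ps ! i)"
    if "i < n" for F G i
    using rem_add[OF Pnz[OF that], of "F - G" G] by simp
  have inI: "F \<in> ?I" if "\<And>i. i < n \<Longrightarrow> skew_rem \<sigma> \<delta> F (Ps ! i) = 0" for F
    unfolding I_iff
  proof
    fix P assume "P \<in> set Ps"
    then obtain i where i: "i < n" "P = Ps ! i" by (auto simp: in_set_conv_nth n_def)
    show "\<exists>Q. F = M Q P" using rem_zero_iff[OF Pnz[OF i(1)]] that[OF i(1)] i(2) by simp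
  qed
  have lin_phi: "left_linear_on (deg_less N) n \<phi>"
    unfolding left_linear_on_def
  proof (intro conjI ballI allI)
    fix F G :: "'a poly"
    show "\<phi> (F + G) = (\<lambda>i\<in>{..<n}. \<phi> F i + \<phi> G i)"
      unfolding phi_def n_def by (rule restrict_ext) (simp add: rem_add Pnz')
  next
    fix a and F :: "'a poly"
    show "\<phi> (lsmult a F) = (\<lambda>i\<in>{..<n}. lsmult a (\<phi> F i))"
      unfolding phi_def n_def by (rule restrict_ext) (simp add: rem_lsmult Pnz')
  qed
  have inj: "F = G" if "F \<in> deg_less N" "G \<in> deg_less N" "\<phi> F = \<phi> G" for F G
  proof (rule ccontr)
    assume ne: "F \<noteq> G"
    have "F - G \<in> ?I"
    proof (rule inI)
      fix i assume i: "i < n"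
      have "skew_rem \<sigma> \<delta> F (Ps ! i) = skew_rem \<sigma> \<delta> G (Ps ! i)"
      proof -
        have "\<phi> F i = \<phi> G i" using that(3) by simp
        then show ?thesis by (simp add: phi_i[OF i])
      qed
      then show "skew_rem \<sigma> \<delta> (F - G) (Ps ! i) = 0" by (simp add: rem_diff[OF i])
    qed
    then have "N \<le> degree (F - G)" using FO(3) ne by simp
    moreover have "F - G \<in> deg_less N" using deg_less_diff that by blast
    ultimately show False using ne by (simp add: deg_less_def)
  qed
  have img: "\<phi> ` UNIV = \<phi> ` deg_less N"
  proof
    show "\<phi> ` UNIV \<subseteq> \<phi> ` deg_less N"
    proof
      fix y assume "y \<in> \<phi> ` UNIV"
      then obtain F where y: "y = \<phi> F" by auto
      obtain Q R where QR: "F = M Q ?FO + R" "R \<in> deg_less N"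
        using divide[OF FO(2), of F] by (auto simp: N_def)
      have MI: "M Q ?FO \<in> ?I" by (rule I_mult[OF FO(1)])
      have "\<phi> F = \<phi> R"
        unfolding phi_def
      proof (rule restrict_ext)
        fix i assume "i \<in> {..<length Ps}"
        then have i: "i < n" by (simp add: n_def)
        have z: "skew_rem \<sigma> \<delta> (M Q ?FO) (Ps ! i) = 0"
        proof -
          have mem: "Ps ! i \<in> set Ps" using i by (simp add: n_def)
          have "\<exists>Q'. M Q ?FO = M Q' (Ps ! i)" using MI mem unfolding I_iff by blast
          then show ?thesis using rem_zero_iff[OF Pnz[OF i]] by blast
        qed
        show "skew_rem \<sigma> \<delta> F (Ps ! i) = skew_rem \<sigma> \<delta> R (Ps ! i)"
          using QR(1) rem_add[OF Pnz[OF i], of "M Q ?FO" R] z by simp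
      qed
      then show "y \<in> \<phi> ` deg_less N" using y QR(2) by auto
    qed
  qed auto
  define I0 where "I0 = {..<N}"
  define J0 where "J0 = (SIGMA i:{..<n}. {..<degree (Ps ! i)})"
  define dec1 where "dec1 = (\<lambda>v::nat \<Rightarrow> 'a. Poly (map v [0..<N]))"
  define L where "L = (\<lambda>v (i, j). if (i, j) \<in> J0 then coeff (skew_rem \<sigma> \<delta> (dec1 v) (Ps ! i)) j else 0)"
  have cdec: "coeff (dec1 v) k = (if k < N then v k else 0)" for v k
    unfolding dec1_def by (rule coeff_dec1)
  have dec_in: "dec1 v \<in> deg_less N" for v by (simp add: deg_less_iff cdec)
  have dec_add: "dec1 (\<lambda>x. u x + v x) = dec1 u + dec1 v" for u v
    by (rule poly_eqI) (simp add: cdec)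
  have dec_scale: "dec1 (\<lambda>x. a * v x) = lsmult a (dec1 v)" for a v
    by (rule poly_eqI) (simp add: cdec)
  have J0i: "i < n" if "(i, j) \<in> J0" for i j using that by (simp add: J0_def)
  have lin: "llin I0 L"
    unfolding llin_def
  proof (intro conjI ballI allI)
    fix u v :: "nat \<Rightarrow> 'a"
    show "L (\<lambda>x. u x + v x) = (\<lambda>y. L u y + L v y)"
    proof
      fix y :: "nat \<times> nat"
      obtain i j where y: "y = (i, j)" by fastforce
      show "L (\<lambda>x. u x + v x) y = L u y + L v y"
      proof (cases "(i, j) \<in> J0")
        case True
        then have i: "i < n" by (rule J0i)
        show ?thesis using True by (simp add: L_def y dec_add rem_add[OF Pnz[OF i]])
      next
        case False
        then show ?thesis by (simp add: L_def y)
      qed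
    qed
  next
    fix a and v :: "nat \<Rightarrow> 'a"
    show "L (\<lambda>x. a * v x) = (\<lambda>y. a * L v y)"
    proof
      fix y :: "nat \<times> nat"
      obtain i j where y: "y = (i, j)" by fastforce
      show "L (\<lambda>x. a * v x) y = a * L v y"
      proof (cases "(i, j) \<in> J0")
        case True
        then have i: "i < n" by (rule J0i)
        show ?thesis using True by (simp add: L_def y dec_scale rem_lsmult[OF Pnz[OF i]])
      next
        case False
        then show ?thesis by (simp add: L_def y)
      qed
    qed
  qed
  have maps: "\<forall>v\<in>Vs I0. L v \<in> Vs J0" unfolding Vs_def L_def by auto
  have ker: "\<forall>v\<in>Vs I0. L v = (\<lambda>_. 0) \<longrightarrow> v = (\<lambda>_. 0)"
  proof (intro ballI impI)
    fix v :: "nat \<Rightarrow> 'a" assume v: "v \<in> Vs I0" and k: "L v = (\<lambda>_. 0)"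
    have r0: "skew_rem \<sigma> \<delta> (dec1 v) (Ps ! i) = 0" if i: "i < n" for i
    proof (rule poly_eqI)
      fix j
      show "coeff (skew_rem \<sigma> \<delta> (dec1 v) (Ps ! i)) j = coeff 0 j"
      proof (cases "j < degree (Ps ! i)")
        case True
        then have "(i, j) \<in> J0" using i by (simp add: J0_def)
        then show ?thesis using fun_cong[OF k, of "(i, j)"] by (simp add: L_def)
      next
        case False
        then show ?thesis using rem_props(1)[OF Pnz[OF i], of "dec1 v"] by (simp add: deg_less_iff)
      qed
    qed
    have "\<phi> (dec1 v) = \<phi> 0"
      unfolding phi_def by (rule restrict_ext) (simp add: r0 rem_0 Pnz n_def)
    then have "dec1 v = 0" using inj dec_in deg_less_0 by blast
    then show "v = (\<lambda>_. 0)"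
    proof -
      assume d: "dec1 v = 0"
      show ?thesis
      proof
        fix k
        have c0: "coeff (dec1 v) k = 0" using d by simp
        show "v k = 0"
        proof (cases "k < N")
          case True then show ?thesis using c0 by (simp add: cdec)
        next
          case False then show ?thesis using v by (simp add: Vs_def I0_def)
        qed
      qed
    qed
  qed
  have fin: "finite I0" "finite J0" by (auto simp: I0_def J0_def)
  have cI: "card I0 = N" by (simp add: I0_def)
  have cJ: "card J0 = (\<Sum>P\<in>set Ps. degree P)"
  proof -
    have "card J0 = (\<Sum>i<n. degree (Ps ! i))" by (simp add: J0_def)
    also have "\<dots> = sum_list (map degree Ps)"
      by (simp add: sum_list_sum_nth n_def atLeast0LessThan)
    also have "\<dots> = (\<Sum>P\<in>set Ps. degree P)" by (rule sum_list_distinct_conv_sum_set[OF assms(3)])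
    finally show ?thesis .
  qed
  have Pind: "P_independent \<sigma> \<delta> (set Ps) \<longleftrightarrow> N = card J0"
    using assms(5) by (simp add: P_independent_def cJ N_def)
  have NleJ: "N \<le> card J0" using L1[OF fin(2,1) lin maps ker] cI by simp
  have surj1: "Vs J0 \<subseteq> L ` Vs I0" if "?T \<subseteq> \<phi> ` deg_less N"
  proof
    fix c :: "nat \<times> nat \<Rightarrow> 'a" assume c: "c \<in> Vs J0"
    define T where "T = (\<lambda>i\<in>{..<n}. Poly (map (\<lambda>j. c (i, j)) [0..<degree (Ps ! i)]))"
    have "T \<in> ?T" unfolding T_def restrict_PiE_iff
      by (simp add: deg_less_iff nth_default_beyond)
    then have "T \<in> \<phi> ` deg_less N" using that by (rule subsetD[rotated])
    then obtain F where F: "F \<in> deg_less N" "\<phi> F = T" by (metis imageE)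
    define v where "v = coeff F"
    have vI: "v \<in> Vs I0" using F(1) by (auto simp: Vs_def v_def I0_def deg_less_iff)
    have dv: "dec1 v = F" using F(1) by (intro poly_eqI) (auto simp: cdec v_def deg_less_iff)
    have "L v = c"
    proof
      fix ij :: "nat \<times> nat"
      obtain i j where ij: "ij = (i, j)" by fastforce
      show "L v ij = c ij"
      proof (cases "(i, j) \<in> J0")
        case True
        then have i: "i < n" and j: "j < degree (Ps ! i)" by (auto simp: J0_def)
        have "\<phi> F i = T i" by (simp add: F(2))
        then have "skew_rem \<sigma> \<delta> F (Ps ! i) = T i" by (simp add: phi_i[OF i])
        then show ?thesis using True i j by (simp add: L_def ij dv T_def nth_default_nth)
      next
        case False
        then show ?thesis using c by (simp add: L_def ij Vs_def)
      qed
    qed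
    then show "c \<in> L ` Vs I0" using vI by blast
  qed
  have surj2: "?T \<subseteq> \<phi> ` deg_less N" if "Vs J0 \<subseteq> L ` Vs I0"
  proof
    fix T :: "nat \<Rightarrow> 'a poly" assume T: "T \<in> ?T"
    define c where "c = (\<lambda>(i, j). if (i, j) \<in> J0 then coeff (T i) j else (0::'a))"
    have "c \<in> Vs J0" by (auto simp: Vs_def c_def)
    then have "c \<in> L ` Vs I0" using that by (rule subsetD[rotated])
    then obtain v where v: "v \<in> Vs I0" "L v = c" by (metis imageE)
    have "\<phi> (dec1 v) = T"
    proof
      fix i show "\<phi> (dec1 v) i = T i"
      proof (cases "i < n")
        case True
        show ?thesis
        proof (rule poly_eqI)
          fix j
          show "coeff (\<phi> (dec1 v) i) j = coeff (T i) j"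
          proof (cases "j < degree (Ps ! i)")
            case jt: True
            then have "(i, j) \<in> J0" using True by (simp add: J0_def)
            then show ?thesis using fun_cong[OF v(2), of "(i, j)"] True
              by (simp add: L_def c_def phi_i)
          next
            case False
            have "T i \<in> deg_less (degree (Ps ! i))" using T True by auto
            then show ?thesis using False rem_props(1)[OF Pnz[OF True], of "dec1 v"] True
              by (simp add: deg_less_iff phi_i)
          qed
        qed
      next
        case False
        then show ?thesis using T by (simp add: phi_def n_def PiE_def extensional_def)
      qed
    qed
    then show "T \<in> \<phi> ` deg_less N" using dec_in by blast
  qed
  have A1: "P_independent \<sigma> \<delta> (set Ps) \<Longrightarrow> \<phi> ` deg_less N = ?T"
  proof -
    assume "P_independent \<sigma> \<delta> (set Ps)"
    then have "card J0 \<le> card I0" using Pind cI by simp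
    then have "Vs J0 \<subseteq> L ` Vs I0" by (rule L3[OF fin(2,1) _ lin maps ker])
    then have "?T \<subseteq> \<phi> ` deg_less N" by (rule surj2)
    then show ?thesis using phi_in by blast
  qed
  have A2: "\<phi> ` deg_less N = ?T \<Longrightarrow> P_independent \<sigma> \<delta> (set Ps)"
  proof -
    assume "\<phi> ` deg_less N = ?T"
    then have "Vs J0 \<subseteq> L ` Vs I0" using surj1 by blast
    then have "card J0 \<le> card I0" by (rule L2[OF fin(2,1) lin maps])
    then show ?thesis using Pind cI NleJ by simp
  qed
  have injon: "inj_on \<phi> (deg_less N)" using inj by (auto simp: inj_on_def)
  show ?thesis
  proof
    show "P_independent \<sigma> \<delta> (set Ps) \<longleftrightarrow> left_linear_on (deg_less N) n \<phi> \<and> bij_betw \<phi> (deg_less N) ?T"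
      unfolding bij_betw_def using A1 A2 lin_phi injon by blast
    show "P_independent \<sigma> \<delta> (set Ps) \<longleftrightarrow> \<phi> ` UNIV = ?T"
      unfolding img using A1 A2 by blast
  qed
qed

end
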